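(* For every positive integer $n$, the $n$th Catalan number $C_n=\frac{1}{n+1}\binom{2n}{n}$ equals the determinant $$C_n=\det\left(\binom{i+1}{j-i+1}\right)_{i,j=0}^{n-1},$$ i.e. the determinant of the $n\times n$ Hessenberg matrix whose row $i$ ($0\le i\le n-1$) contains the entries $\binom{i+1}{0},\binom{i+1}{1},\dots$ starting in column $i-1$ (so row $0$ is $(\binom{1}{1},0,\dots,0)$, row $1$ is $(\binom{2}{0},\binom{2}{1},\binom{2}{2},0,\dots)$, row $2$ is $(0,\binom{3}{0},\binom{3}{1},\binom{3}{2},\binom{3}{3},0,\dots)$, and the last row is $(0,\dots,0,\binom{n}{0},\binom{n}{1})$), all entries outside the matrix being truncated.
   Context: Convention: $\binom{a}{b}=0$ if $b<0$ or $b>a$ (for nonnegative integer $a$). Rows and columns are indexed from $0$ to $n-1$. *)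

theory Defs
  imports "Jordan_Normal_Form.Determinant"
begin

definition binom :: "nat \<Rightarrow> int \<Rightarrow> int" where
  "binom a b = (if b < 0 then 0 else int (a choose nat b))"

definition catalan_hessenberg :: "nat \<Rightarrow> int mat" where
  "catalan_hessenberg n = mat n n (\<lambda>(i, j). binom (i + 1) (int j - int i + 1))"

end

theory Submission imports Defs begin

definition Ublk :: "nat \<Rightarrow> nat \<Rightarrow> int mat" where
  "Ublk i r = mat r r (\<lambda>(a,b). binom (a+i+2) (int b - int a))"

lemma det_Ublk: "det (Ublk i r) = 1"
proof -
  have ut: "upper_triangular (Ublk i r)"
    unfolding upper_triangular_def Ublk_def binom_def by auto
  have "det (Ublk i r) = prod_list (diag_mat (Ublk i r))"
    by (rule det_upper_triangular[OF ut, of r]) (simp add: Ublk_def)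
  also have "\<dots> = 1" unfolding prod_list_diag_prod
    by (rule prod.neutral) (simp add: Ublk_def binom_def)
  finally show ?thesis .
qed

lemma delete_block:
  assumes "i \<le> n"
  shows "mat_delete (catalan_hessenberg (Suc n)) i n =
    four_block_mat (catalan_hessenberg i)
      (mat i (n-i) (\<lambda>(a,b). catalan_hessenberg (Suc n) $$ (a, b+i)))
      (0\<^sub>m (n-i) i) (Ublk i (n-i))"
  (is "?L = ?R")
proof (rule eq_matI)
  show "dim_row ?L = dim_row ?R" "dim_col ?L = dim_col ?R"
    using assms by (simp_all add: catalan_hessenberg_def Ublk_def mat_delete_def)
  fix a b assume ab: "a < dim_row ?R" "b < dim_col ?R"
  hence a: "a < n" and b: "b < n" using assms by (auto simp: catalan_hessenberg_def Ublk_def)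
  have L: "?L $$ (a,b) = binom ((if a < i then a else Suc a) + 1) (int b - int (if a < i then a else Suc a) + 1)"
    unfolding mat_delete_def catalan_hessenberg_def using a b by simp
  show "?L $$ (a,b) = ?R $$ (a,b)"
    unfolding L using a b assms
    by (auto simp: catalan_hessenberg_def Ublk_def binom_def)
qed

lemma det_delete:
  assumes "i \<le> n"
  shows "det (mat_delete (catalan_hessenberg (Suc n)) i n) = det (catalan_hessenberg i)"
proof -
  have c1: "catalan_hessenberg i \<in> carrier_mat i i" by (simp add: catalan_hessenberg_def)
  have c4: "Ublk i (n-i) \<in> carrier_mat (n-i) (n-i)" by (simp add: Ublk_def)
  have c2: "mat i (n-i) (\<lambda>(a,b). catalan_hessenberg (Suc n) $$ (a, b+i)) \<in> carrier_mat i (n-i)" by simp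
  show ?thesis unfolding delete_block[OF assms]
    det_four_block_mat_lower_left_zero[OF c1 c2 refl c4] det_Ublk by simp
qed

lemma det_rec:
  "det (catalan_hessenberg (Suc n)) =
     (\<Sum>i<Suc n. binom (i+1) (int n - int i + 1) * ((-1)^(i+n) * det (catalan_hessenberg i)))"
proof -
  have C: "catalan_hessenberg (Suc n) \<in> carrier_mat (Suc n) (Suc n)"
    by (simp add: catalan_hessenberg_def)
  show ?thesis
    unfolding laplace_expansion_column[OF C lessI]
  proof (rule sum.cong)
    fix i assume "i \<in> {..<Suc n}"
    hence i: "i \<le> n" by simp
    show "catalan_hessenberg (Suc n) $$ (i, n) * cofactor (catalan_hessenberg (Suc n)) i n =
      binom (i+1) (int n - int i + 1) * ((-1)^(i+n) * det (catalan_hessenberg i))"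
      unfolding cofactor_def det_delete[OF i] using i by (simp add: catalan_hessenberg_def)
  qed simp
qed

declare binomial_Suc_Suc[simp del]

lemma cat_step: "(k+1) * ((2*k+2) choose (k+1)) = 2*(2*k+1)*((2*k) choose k)"
proof -
  have a: "(k+1) * ((2*k+2) choose (k+1)) = (2*k+2) * ((2*k+1) choose k)"
    using Suc_times_binomial[of k "2*k+1"] by (simp del: binomial_Suc_Suc mult_Suc mult_Suc_right)
  have b: "(k+1) * ((2*k+1) choose k) = (2*k+1) * ((2*k) choose k)"
  proof -
    have "((2*k+1) choose k) = ((2*k+1) choose (k+1))"
      using binomial_symmetric[of k "2*k+1"] by simp
    thus ?thesis using Suc_times_binomial[of k "2*k"] by (simp del: binomial_Suc_Suc mult_Suc mult_Suc_right)
  qed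
  have "(k+1) * ((k+1) * ((2*k+2) choose (k+1))) = (k+1) * ((2*k+2) * ((2*k+1) choose k))"
    using a by simp
  also have "\<dots> = 2 * ((k+1) * ((2*k+1) choose k)) * (k+1)" by (simp only: ac_simps) (simp add: algebra_simps)
  also have "\<dots> = (k+1) * (2*(2*k+1)*((2*k) choose k))" using b by simp
  finally show ?thesis by (subst (asm) mult_left_cancel) auto
qed

lemma binom_rel: "(j+1)*(j+2) * ((p+j+2) choose p) = (p+1)*(p+j+2) * ((p+j+1) choose (p+1))"
proof -
  have 1: "((p+j+2) choose p) = ((p+j+2) choose (j+2))"
    using binomial_symmetric[of p "p+j+2"] by simp
  have 2: "(j+2) * ((p+j+2) choose (j+2)) = (p+j+2) * ((p+j+1) choose (j+1))"
    using Suc_times_binomial[of "j+1" "p+j+1"] by (simp del: binomial_Suc_Suc mult_Suc mult_Suc_right)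
  have 3: "(j+1) * ((p+j+1) choose (j+1)) = (p+1) * ((p+j+1) choose (p+1))"
  proof -
    have "((p+j+1) choose (j+1)) = ((p+j+1) choose p)"
      using binomial_symmetric[of "j+1" "p+j+1"] by simp
    moreover have "((p+j+1) choose (p+1)) = ((p+j+1) choose j)"
      using binomial_symmetric[of "p+1" "p+j+1"] by simp
    moreover have "(j+1) * ((p+j+1) choose (j+1)) = (p+j+1) * ((p+j) choose j)"
      using Suc_times_binomial[of j "p+j"] by (simp del: binomial_Suc_Suc mult_Suc mult_Suc_right)
    moreover have "(p+1) * ((p+j+1) choose (p+1)) = (p+j+1) * ((p+j) choose p)"
      using Suc_times_binomial[of p "p+j"] by (simp del: binomial_Suc_Suc mult_Suc mult_Suc_right)
    moreover have "((p+j) choose j) = ((p+j) choose p)"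
      using binomial_symmetric[of p "p+j"] by simp
    ultimately show ?thesis by (simp del: binomial_Suc_Suc mult_Suc mult_Suc_right)
  qed
  have "(j+1)*(j+2) * ((p+j+2) choose p) = (j+1) * ((j+2) * ((p+j+2) choose (j+2)))"
    using 1 by (simp add: algebra_simps)
  also have "\<dots> = (p+j+2) * ((j+1) * ((p+j+1) choose (j+1)))" unfolding 2 by (rule mult.left_commute)
  also have "\<dots> = (p+1)*(p+j+2) * ((p+j+1) choose (p+1))" unfolding 3 by (simp only: ac_simps)
  finally show ?thesis .
qed

definition catr :: "nat \<Rightarrow> real" where "catr k = real ((2*k) choose k) / (k+1)"
definition T :: "nat \<Rightarrow> nat \<Rightarrow> real" where
  "T n k = (-1)^(n-k) * real ((k+1) choose (n-k)) * catr k"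

lemma catr_Suc: "catr (k+1) = catr k * (2*(2*k+1)) / (k+2)"
proof -
  define X where "X = real ((2*k+2) choose (k+1))"
  define Y where "Y = real ((2*k) choose k)"
  have e: "(real k + 1) * X = 2*(2*real k+1) * Y"
    using arg_cong[OF cat_step[of k], of real] unfolding X_def Y_def by (simp add: algebra_simps)
  have c1: "catr (k+1) = X / (real k + 2)"
    unfolding catr_def X_def by (simp add: mult_2 add_ac)
  have c0: "catr k = Y / (real k + 1)" unfolding catr_def Y_def by simp
  have "Y / (real k + 1) * (2*(2*real k+1)) / (real k + 2) = (2*(2*real k+1) * Y) / ((real k + 1) * (real k + 2))"
    by simp
  also have "\<dots> = ((real k + 1) * X) / ((real k + 1) * (real k + 2))" unfolding e ..
  also have "\<dots> = X / (real k + 2)" by simp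
  finally have F: "Y / (real k + 1) * (2*(2*real k+1)) / (real k + 2) = X / (real k + 2)" .
  have A: "catr k * (2*(2*k+1)) / (k+2) = Y / (real k + 1) * (2*(2*real k+1)) / (real k + 2)"
    unfolding c0 by (simp add: ac_simps)
  show ?thesis by (simp only: c1 A F)
qed

lemma binom_rel_real:
  assumes "1 \<le> m"
  shows "(real k + 2 - m) * (real k + 3 - m) * real ((k+2) choose (m-1))
       = real m * (k+2) * real ((k+1) choose m)"
proof (cases "m \<le> k+1")
  case True
  define p where "p = m - 1"
  define j where "j = k + 1 - m"
  have k2: "k + 2 = p + j + 2" and k1: "k+1 = p+j+1" and m1: "m = p+1"
    using True assms unfolding p_def j_def by auto
  have "real ((j+1)*(j+2) * ((p+j+2) choose p)) = real ((p+1)*(p+j+2) * ((p+j+1) choose (p+1)))"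
    by (simp only: binom_rel)
  hence "(real j+1)*(real j+2) * real ((p+j+2) choose p) = (real p+1)*(real p+real j+2) * real ((p+j+1) choose (p+1))"
    by (simp add: algebra_simps)
  moreover have "real k + 2 - m = real j + 1" "real k + 3 - m = real j + 2" using True unfolding j_def by auto
  ultimately show ?thesis unfolding k2 k1 m1 using k2 by (simp add: algebra_simps)
next
  case False
  hence z: "(k+1) choose m = 0" by simp
  show ?thesis
  proof (cases "m \<le> k+3")
    case True
    with False have "m = k+2 \<or> m = k+3" by auto
    thus ?thesis using z by auto
  next
    case False
    hence "(k+2) choose (m-1) = 0" by (intro binomial_eq_0) simp
    thus ?thesis using z by (simp only: of_nat_0 mult_zero_right)
  qed
qed

lemma T_rel:
  assumes "k < n"
  shows "(real k + 2 - real (n-k)) * (real k + 3 - real (n-k)) * T n (k+1)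
       = - 2 * real (n-k) * (2*k+1) * T n k"
proof -
  define m where "m = n - k"
  have m1: "1 \<le> m" using assms unfolding m_def by auto
  have nk: "n - (k+1) = m - 1" unfolding m_def by auto
  have sg: "(-1::real)^(m-1) = - ((-1)^m)" using m1
  proof -
    obtain q where q: "m = Suc q" using m1 by (cases m) auto
    show ?thesis unfolding q by simp
  qed
  have B: "(real k + 2 - m) * (real k + 3 - m) * real ((k+2) choose (m-1))
       = real m * (k+2) * real ((k+1) choose m)" using binom_rel_real[OF m1] by simp
  have "(real k + 2 - m) * (real k + 3 - m) * T n (k+1)
     = - ((-1)^m) * ((real k + 2 - m) * (real k + 3 - m) * real ((k+2) choose (m-1))) * catr (k+1)"
    unfolding T_def nk sg by (simp add: algebra_simps)
  also have "\<dots> = - ((-1)^m) * (real m * (k+2) * real ((k+1) choose m)) * (catr k * (2*(2*k+1)) / (k+2))"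
    unfolding B catr_Suc ..
  also have "\<dots> = - 2 * real m * (2*k+1) * T n k"
    unfolding T_def m_def[symmetric] by (simp add: field_simps)
  finally show ?thesis unfolding m_def .
qed

lemma T_partial:
  assumes "1 \<le> n" "k \<le> n"
  shows "(\<Sum>j\<le>k. T n j) = T n k * (2 * real (n-k) * (2*k+1)) / (real n * (n+1))"
  using assms(2)
proof (induction k)
  case 0
  show ?case
  proof (cases "n = 1")
    case True thus ?thesis by (simp add: T_def catr_def)
  next
    case False
    hence "n \<ge> 2" using assms by auto
    hence "T n 0 = 0" unfolding T_def by simp
    thus ?thesis by simp
  qed
next
  case (Suc k)
  hence kn: "k < n" by simp
  have IH: "(\<Sum>j\<le>k. T n j) = T n k * (2 * real (n-k) * (2*k+1)) / (real n * (n+1))"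
    using Suc by simp
  have R: "(real k + 2 - real (n-k)) * (real k + 3 - real (n-k)) * T n (k+1)
       = - 2 * real (n-k) * (2*k+1) * T n k" by (rule T_rel[OF kn])
  have nk: "real (n - k) = real n - real k" "real (n - Suc k) = real n - real k - 1" using kn by auto
  have npos: "real n * (n+1) > 0" using assms by auto
  have "(\<Sum>j\<le>Suc k. T n j) = T n k * (2 * real (n-k) * (2*k+1)) / (real n * (n+1)) + T n (Suc k)"
    using IH by simp
  also have "\<dots> = (- (real k + 2 - real (n-k)) * (real k + 3 - real (n-k)) * T n (k+1)) / (real n * (n+1)) + T n (Suc k)"
    using R by (simp add: algebra_simps)
  also have "\<dots> = T n (Suc k) * (2 * real (n - Suc k) * (2*(Suc k)+1)) / (real n * (n+1))"
    using npos unfolding nk by (simp add: field_simps)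
  finally show ?case .
qed

lemma catr_rec:
  assumes "1 \<le> n"
  shows "catr n = (\<Sum>k<n. (-1)^(n-1-k) * real ((k+1) choose (n-k)) * catr k)"
proof -
  have "(\<Sum>j\<le>n. T n j) = 0" using T_partial[OF assms, of n] by simp
  moreover have "(\<Sum>j\<le>n. T n j) = (\<Sum>j<n. T n j) + catr n"
    by (simp add: lessThan_Suc_atMost[symmetric] T_def)
  ultimately have "catr n = - (\<Sum>j<n. T n j)" by simp
  also have "\<dots> = (\<Sum>k<n. (-1)^(n-1-k) * real ((k+1) choose (n-k)) * catr k)"
    unfolding sum_negf[symmetric]
  proof (rule sum.cong)
    fix k assume "k \<in> {..<n}"
    hence "n - k = Suc (n-1-k)" by auto
    thus "- T n k = (-1)^(n-1-k) * real ((k+1) choose (n-k)) * catr k"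
      unfolding T_def by simp
  qed simp
  finally show ?thesis .
qed

lemma main_eq: "real_of_int (det (catalan_hessenberg n)) = catr n"
proof (induction n rule: less_induct)
  case (less n)
  show ?case
  proof (cases n)
    case 0
    have "det (catalan_hessenberg 0) = 1"
      by (rule det_upper_triangular[of _ 0, THEN trans])
         (auto simp: catalan_hessenberg_def upper_triangular_def diag_mat_def)
    thus ?thesis using 0 by (simp add: catr_def)
  next
    case (Suc m)
    have "real_of_int (det (catalan_hessenberg (Suc m))) =
      (\<Sum>k<Suc m. real_of_int (binom (k+1) (int m - int k + 1)) * ((-1)^(k+m) * real_of_int (det (catalan_hessenberg k))))"
      unfolding det_rec by simp
    also have "\<dots> = (\<Sum>k<Suc m. (-1)^(Suc m - 1 - k) * real ((k+1) choose (Suc m - k)) * catr k)"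
    proof (rule sum.cong)
      fix k assume "k \<in> {..<Suc m}"
      hence k: "k \<le> m" by simp
      have b: "binom (k+1) (int m - int k + 1) = int ((k+1) choose (Suc m - k))"
      proof -
        have "nat (int m - int k + 1) = Suc m - k" using k by simp
        thus ?thesis unfolding binom_def using k by simp
      qed
      have s: "(-1::real)^(k+m) = (-1)^(Suc m - 1 - k)"
      proof -
        have e: "k + m = (m - k) + 2*k" using k by simp
        show ?thesis unfolding e by (simp add: power_add power_mult)
      qed
      have "real_of_int (det (catalan_hessenberg k)) = catr k" using less Suc k by simp
      thus "real_of_int (binom (k+1) (int m - int k + 1)) * ((-1)^(k+m) * real_of_int (det (catalan_hessenberg k)))
        = (-1)^(Suc m - 1 - k) * real ((k+1) choose (Suc m - k)) * catr k"
        unfolding b s by simp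
    qed simp
    also have "\<dots> = catr (Suc m)" by (rule catr_rec[symmetric]) simp
    finally show ?thesis using Suc by simp
  qed
qed

theorem theorem1:
  fixes n :: nat
  assumes "n \<ge> 1"
  shows "real_of_int (det (catalan_hessenberg n)) = real ((2 * n) choose n) / real (n + 1)"
  using main_eq[of n] by (simp add: catr_def)

end
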